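(* Let $\mathcal{S}\subseteq\mathcal{G}$ with $|\mathcal{S}|=H$ and $t\in[T]$. Suppose Assumptions 1 and 2 hold and $\|K^{(t)}_{k,\mathcal{S}}-\hat K^{(t)}_{k,\mathcal{S}}\|\le\varepsilon$ for all $k\in\{0,\dots,N-1\}$, where $\varepsilon>0$. Let $\zeta_{\mathcal{S}}\ge1$ and $\eta_{\mathcal{S}}\in(0,1)$ be such that $\|\Psi^{(t)}_{k_2,k_1}(\mathcal{S})\|\le\zeta_{\mathcal{S}}\eta_{\mathcal{S}}^{k_2-k_1}$ for all $0\le k_1\le k_2\le N$. If $\varepsilon\le\frac{1-\eta_{\mathcal{S}}}{2\|B_{\mathcal{S}}\|\zeta_{\mathcal{S}}}$, then for all $0\le k_1\le k_2\le N$, $$\|\hat\Psi^{(t)}_{k_2,k_1}(\mathcal{S})\|\le\zeta_{\mathcal{S}}\Big(\frac{1+\eta_{\mathcal{S}}}{2}\Big)^{k_2-k_1}.$$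
   Context: $A\in\mathbb{R}^{n\times n}$, $B=[B_1\ \cdots\ B_q]\in\mathbb{R}^{n\times m}$ with $B_i\in\mathbb{R}^{n\times m_i}$, actuator set $\mathcal{G}=\{1,\dots,q\}$, $H\ge1$ fixed; for $\mathcal{S}=\{i_1<\dots<i_H\}$, $B_{\mathcal{S}}=[B_{i_1}\ \cdots\ B_{i_H}]$. Horizon $N\ge1$, rounds $T\ge1$; for each $t\in[T]$: $Q^{(t)},Q_f^{(t)}\in\mathbb{S}^n_+$, $R^{(t)}\in\mathbb{S}^m_{++}$, $R^{(t)}_{\mathcal{S}}$ the principal submatrix for actuators in $\mathcal{S}$. Riccati recursion: $P^{(t)}_{N,\mathcal{S}}=Q_f^{(t)}$ and for $k=N-1,\dots,0$: $K^{(t)}_{k,\mathcal{S}}=-(B_{\mathcal{S}}^\top P^{(t)}_{k+1,\mathcal{S}}B_{\mathcal{S}}+R^{(t)}_{\mathcal{S}})^{-1}B_{\mathcal{S}}^\top P^{(t)}_{k+1,\mathcal{S}}A$, $P^{(t)}_{k,\mathcal{S}}=Q^{(t)}+A^\top P^{(t)}_{k+1,\mathcal{S}}A-A^\top P^{(t)}_{k+1,\mathcal{S}}B_{\mathcal{S}}(B_{\mathcal{S}}^\top P^{(t)}_{k+1,\mathcal{S}}B_{\mathcal{S}}+R^{(t)}_{\mathcal{S}})^{-1}B_{\mathcal{S}}^\top P^{(t)}_{k+1,\mathcal{S}}A$; $\hat K^{(t)}_{k,\mathcal{S}}$ are the gains from the same recursion with $(A,B_{\mathcal{S}})$ replaced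 by estimates $(\hat A,\hat B_{\mathcal{S}})$. $\Psi^{(t)}_{k_2,k_1}(\mathcal{S})=(A+B_{\mathcal{S}}K^{(t)}_{k_2-1,\mathcal{S}})\cdots(A+B_{\mathcal{S}}K^{(t)}_{k_1,\mathcal{S}})$ and $\hat\Psi^{(t)}_{k_2,k_1}(\mathcal{S})=(A+B_{\mathcal{S}}\hat K^{(t)}_{k_2-1,\mathcal{S}})\cdots(A+B_{\mathcal{S}}\hat K^{(t)}_{k_1,\mathcal{S}})$ for $k_2>k_1$, both equal to $I$ when $k_2=k_1$. Assumption 1: for all $t$, $Q_f^{(t)}\succ0$, $\sigma_n(Q^{(t)})\ge1$, $\sigma_m(R^{(t)})\ge1$. Assumption 2: there are $\ell\in\{1,\dots,n-1\}$ and $\nu>0$ with $\sigma_n([B_{\mathcal{S}}\ AB_{\mathcal{S}}\ \cdots\ A^{\ell-1}B_{\mathcal{S}}])\ge\nu$ for all $|\mathcal{S}|=H$. *)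

theory Defs
  imports Complex_Main "Jordan_Normal_Form.Matrix" "Jordan_Normal_Form.DL_Submatrix"
begin

definition vnorm :: "real vec \<Rightarrow> real" where
  "vnorm v = sqrt (\<Sum>i<dim_vec v. (v $ i)^2)"

definition opnorm :: "real mat \<Rightarrow> real" where
  "opnorm M = Sup {vnorm (M *\<^sub>v v) | v. dim_vec v = dim_col M \<and> vnorm v \<le> 1}"

text \<open>sigma_n of a matrix with n rows (n = number of rows, at most the number of
  columns): the n-th largest singular value, i.e. the square root of the smallest
  eigenvalue of M M^T, i.e. the minimum of the norm of M^T y over unit vectors y.\<close>
definition sigma_n :: "real mat \<Rightarrow> real" where
  "sigma_n M = Inf {vnorm (transpose_mat M *\<^sub>v y) | y. dim_vec y = dim_row M \<and> vnorm y = 1}"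

definition sym_mat :: "nat \<Rightarrow> real mat \<Rightarrow> bool" where
  "sym_mat n M \<longleftrightarrow> M \<in> carrier_mat n n \<and> transpose_mat M = M"

definition psd_mat :: "nat \<Rightarrow> real mat \<Rightarrow> bool" where
  "psd_mat n M \<longleftrightarrow> sym_mat n M \<and> (\<forall>x. dim_vec x = n \<longrightarrow> x \<bullet> (M *\<^sub>v x) \<ge> 0)"

definition pd_mat :: "nat \<Rightarrow> real mat \<Rightarrow> bool" where
  "pd_mat n M \<longleftrightarrow> sym_mat n M \<and> (\<forall>x. dim_vec x = n \<longrightarrow> x \<noteq> 0\<^sub>v n \<longrightarrow> x \<bullet> (M *\<^sub>v x) > 0)"

text \<open>Matrix inverse (applied only to invertible square matrices).\<close>
definition minv :: "real mat \<Rightarrow> real mat" where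
  "minv M = (SOME X. X \<in> carrier_mat (dim_row M) (dim_row M) \<and>
      X * M = 1\<^sub>m (dim_row M) \<and> M * X = 1\<^sub>m (dim_row M))"

text \<open>Actuators are indexed 0..q-1; actuator i has ms i input columns, occupying
  columns blk_off ms i ..< blk_off ms i + ms i of B.\<close>
definition blk_off :: "(nat \<Rightarrow> nat) \<Rightarrow> nat \<Rightarrow> nat" where
  "blk_off ms i = (\<Sum>j<i. ms j)"

definition blk_cols :: "(nat \<Rightarrow> nat) \<Rightarrow> nat set \<Rightarrow> nat set" where
  "blk_cols ms S = (\<Union>i\<in>S. {blk_off ms i ..< blk_off ms i + ms i})"

text \<open>B_S = [B_{i_1} ... B_{i_H}] for S = {i_1 < ... < i_H}.\<close>
definition B_sel :: "(nat \<Rightarrow> nat) \<Rightarrow> real mat \<Rightarrow> nat set \<Rightarrow> real mat" where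
  "B_sel ms B S = submatrix B {0..<dim_row B} (blk_cols ms S)"

definition R_sel :: "(nat \<Rightarrow> nat) \<Rightarrow> real mat \<Rightarrow> nat set \<Rightarrow> real mat" where
  "R_sel ms R S = submatrix R (blk_cols ms S) (blk_cols ms S)"

text \<open>Controllability-type matrix [B, A B, ..., A^(l-1) B].\<close>
definition ctrb :: "real mat \<Rightarrow> real mat \<Rightarrow> nat \<Rightarrow> real mat" where
  "ctrb A Bs l = mat (dim_row Bs) (l * dim_col Bs)
     (\<lambda>(i,j). ((A ^\<^sub>m (j div dim_col Bs)) * Bs) $$ (i, j mod dim_col Bs))"

text \<open>ric_step computes P_k from P_{k+1}.\<close>
definition ric_step :: "real mat \<Rightarrow> real mat \<Rightarrow> real mat \<Rightarrow> real mat \<Rightarrow> real mat \<Rightarrow> real mat" where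
  "ric_step A Bs Q R P = Q + transpose_mat A * P * A
     - transpose_mat A * P * Bs * minv (transpose_mat Bs * P * Bs + R) * transpose_mat Bs * P * A"

text \<open>ric_back j = P_{N-j}.\<close>
fun ric_back :: "real mat \<Rightarrow> real mat \<Rightarrow> real mat \<Rightarrow> real mat \<Rightarrow> real mat \<Rightarrow> nat \<Rightarrow> real mat" where
  "ric_back A Bs Q Qf R 0 = Qf"
| "ric_back A Bs Q Qf R (Suc j) = ric_step A Bs Q R (ric_back A Bs Q Qf R j)"

definition ric_P :: "real mat \<Rightarrow> real mat \<Rightarrow> real mat \<Rightarrow> real mat \<Rightarrow> real mat \<Rightarrow> nat \<Rightarrow> nat \<Rightarrow> real mat" where
  "ric_P A Bs Q Qf R N k = ric_back A Bs Q Qf R (N - k)"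

definition ric_K :: "real mat \<Rightarrow> real mat \<Rightarrow> real mat \<Rightarrow> real mat \<Rightarrow> real mat \<Rightarrow> nat \<Rightarrow> nat \<Rightarrow> real mat" where
  "ric_K A Bs Q Qf R N k =
     (let P = ric_P A Bs Q Qf R N (Suc k) in
       - (minv (transpose_mat Bs * P * Bs + R) * transpose_mat Bs * P * A))"

text \<open>Closed-loop transition Psi_{k2,k1} = (A + Bs K_{k2-1}) ... (A + Bs K_{k1}),
  and the identity when k2 <= k1.\<close>
fun psi :: "real mat \<Rightarrow> real mat \<Rightarrow> (nat \<Rightarrow> real mat) \<Rightarrow> nat \<Rightarrow> nat \<Rightarrow> real mat" where
  "psi A Bs K 0 k1 = 1\<^sub>m (dim_row A)"
| "psi A Bs K (Suc k) k1 =
     (if Suc k \<le> k1 then 1\<^sub>m (dim_row A) else (A + Bs * K k) * psi A Bs K k k1)"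

end

theory Submission
  imports Defs "HOL-Analysis.L2_Norm" "Jordan_Normal_Form.Determinant"
begin

lemma vnorm_L2: "vnorm v = L2_set (\<lambda>i. v $ i) {..<dim_vec v}"
  unfolding vnorm_def L2_set_def by simp

lemma vnorm_nonneg: "vnorm v \<ge> 0"
  unfolding vnorm_L2 by (rule L2_set_nonneg)

lemma vnorm_zero[simp]: "vnorm (0\<^sub>v n) = 0"
  unfolding vnorm_def by simp

lemma vnorm_smult: "vnorm (c \<cdot>\<^sub>v v) = \<bar>c\<bar> * vnorm v"
proof -
  have "vnorm (c \<cdot>\<^sub>v v) = L2_set (\<lambda>i. \<bar>c\<bar> * v $ i) {..<dim_vec v}"
    unfolding vnorm_def L2_set_def by (intro arg_cong[where f=sqrt] sum.cong) (auto simp: power_mult_distrib)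
  also have "\<dots> = \<bar>c\<bar> * vnorm v" unfolding vnorm_L2 by (simp add: L2_set_right_distrib)
  finally show ?thesis .
qed

lemma vnorm_add: assumes "dim_vec u = dim_vec v" shows "vnorm (u + v) \<le> vnorm u + vnorm v"
proof -
  have "vnorm (u + v) = L2_set (\<lambda>i. u $ i + v $ i) {..<dim_vec v}"
    unfolding vnorm_L2 using assms by (intro L2_set_cong) auto
  also have "\<dots> \<le> vnorm u + vnorm v" unfolding vnorm_L2 using assms by (simp add: L2_set_triangle_ineq)
  finally show ?thesis .
qed

lemma vnorm_uminus: "vnorm (- v) = vnorm v"
  unfolding vnorm_def by simp

lemma vnorm_minus: assumes "dim_vec u = dim_vec v" shows "vnorm (u - v) \<le> vnorm u + vnorm v"
proof -
  have "vnorm (u - v) = L2_set (\<lambda>i. u $ i + (- v $ i)) {..<dim_vec v}"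
    unfolding vnorm_L2 using assms by (intro L2_set_cong) auto
  also have "\<dots> \<le> vnorm u + L2_set (\<lambda>i. - v $ i) {..<dim_vec v}"
    using L2_set_triangle_ineq[of "\<lambda>i. u $ i" "\<lambda>i. - v $ i" "{..<dim_vec v}"] assms
    unfolding vnorm_L2 by simp
  also have "L2_set (\<lambda>i. - v $ i) {..<dim_vec v} = vnorm v" unfolding vnorm_L2 L2_set_def by simp
  finally show ?thesis .
qed

lemma vnorm_eq0: assumes "vnorm v = 0" shows "v = 0\<^sub>v (dim_vec v)"
proof -
  have "\<forall>i\<in>{..<dim_vec v}. v $ i = 0" using assms unfolding vnorm_L2 by (subst (asm) L2_set_eq_0_iff) auto
  then show ?thesis by (intro eq_vecI) auto
qed

lemma vnorm_comp: "i < dim_vec v \<Longrightarrow> \<bar>v $ i\<bar> \<le> vnorm v"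
proof -
  assume i: "i < dim_vec v"
  have "\<bar>v $ i\<bar> \<le> L2_set (\<lambda>i. \<bar>v $ i\<bar>) {..<dim_vec v}" using i by (intro member_le_L2_set) auto
  also have "\<dots> = vnorm v" unfolding vnorm_L2 L2_set_def by simp
  finally show ?thesis .
qed

definition abssum :: "real mat \<Rightarrow> real" where
  "abssum M = (\<Sum>i<dim_row M. \<Sum>j<dim_col M. \<bar>M $$ (i,j)\<bar>)"

lemma vnorm_mult_bound: assumes "dim_vec v = dim_col M"
  shows "vnorm (M *\<^sub>v v) \<le> abssum M * vnorm v"
proof -
  have "vnorm (M *\<^sub>v v) \<le> (\<Sum>i<dim_row M. \<bar>(M *\<^sub>v v) $ i\<bar>)"
    unfolding vnorm_L2 dim_mult_mat_vec by (rule L2_set_le_sum_abs)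
  also have "\<dots> \<le> (\<Sum>i<dim_row M. (\<Sum>j<dim_col M. \<bar>M $$ (i,j)\<bar>) * vnorm v)"
  proof (rule sum_mono)
    fix i assume i: "i \<in> {..<dim_row M}"
    have "\<bar>(M *\<^sub>v v) $ i\<bar> = \<bar>\<Sum>j<dim_col M. M $$ (i,j) * v $ j\<bar>"
      using i assms by (simp add: scalar_prod_def lessThan_atLeast0)
    also have "\<dots> \<le> (\<Sum>j<dim_col M. \<bar>M $$ (i,j)\<bar> * \<bar>v $ j\<bar>)"
      by (rule order_trans[OF sum_abs]) (simp add: abs_mult)
    also have "\<dots> \<le> (\<Sum>j<dim_col M. \<bar>M $$ (i,j)\<bar> * vnorm v)"
      using assms by (intro sum_mono mult_left_mono vnorm_comp) auto
    finally show "\<bar>(M *\<^sub>v v) $ i\<bar> \<le> (\<Sum>j<dim_col M. \<bar>M $$ (i,j)\<bar>) * vnorm v"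
      by (simp add: sum_distrib_right)
  qed
  also have "\<dots> = abssum M * vnorm v" unfolding abssum_def by (simp add: sum_distrib_right)
  finally show ?thesis .
qed

definition opset :: "real mat \<Rightarrow> real set" where
  "opset M = {vnorm (M *\<^sub>v v) | v. dim_vec v = dim_col M \<and> vnorm v \<le> 1}"

lemma opset_bdd: "bdd_above (opset M)"
proof (rule bdd_aboveI)
  fix x assume "x \<in> opset M"
  then obtain v where v: "dim_vec v = dim_col M" "vnorm v \<le> 1" and x: "x = vnorm (M *\<^sub>v v)"
    unfolding opset_def by auto
  have "abssum M \<ge> 0" unfolding abssum_def by (intro sum_nonneg) auto
  then show "x \<le> abssum M" using vnorm_mult_bound[OF v(1)] v(2) x
    by (smt (verit) mult_left_le)
qed

lemma opset_ne: "vnorm (M *\<^sub>v 0\<^sub>v (dim_col M)) \<in> opset M"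
  unfolding opset_def by force

lemma opnorm_opset: "opnorm M = Sup (opset M)"
  unfolding opnorm_def opset_def ..

lemma opnorm_nonneg: "opnorm M \<ge> 0"
  unfolding opnorm_opset
  by (rule order_trans[OF vnorm_nonneg cSup_upper[OF opset_ne opset_bdd]])

lemma opnorm_le: assumes "c \<ge> 0" "\<And>v. dim_vec v = dim_col M \<Longrightarrow> vnorm (M *\<^sub>v v) \<le> c * vnorm v"
  shows "opnorm M \<le> c"
  unfolding opnorm_opset
proof (rule cSup_least)
  show "opset M \<noteq> {}" using opset_ne by blast
  fix x assume "x \<in> opset M"
  then obtain v where v: "dim_vec v = dim_col M" "vnorm v \<le> 1" and x: "x = vnorm (M *\<^sub>v v)"
    unfolding opset_def by auto
  show "x \<le> c" using assms(2)[OF v(1)] v(2) assms(1) x by (smt (verit) mult_left_le)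
qed

lemma opnorm_apply: assumes "dim_vec v = dim_col M"
  shows "vnorm (M *\<^sub>v v) \<le> opnorm M * vnorm v"
proof (cases "vnorm v = 0")
  case True
  have v0: "v = 0\<^sub>v (dim_col M)" by (subst vnorm_eq0[OF True]) (simp add: assms)
  have "M *\<^sub>v v = 0\<^sub>v (dim_row M)" unfolding v0 by (intro eq_vecI) (auto simp: scalar_prod_def)
  then show ?thesis using True by simp
next
  case False
  then have pos: "vnorm v > 0" using vnorm_nonneg by (simp add: order_less_le)
  define w where "w = (1 / vnorm v) \<cdot>\<^sub>v v"
  have wd: "dim_vec w = dim_col M" unfolding w_def using assms by simp
  have wn: "vnorm w = 1" unfolding w_def vnorm_smult using pos by simp
  have vc: "v \<in> carrier_vec (dim_col M)" using assms by (rule carrier_vecI)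
  have Mc: "M \<in> carrier_mat (dim_row M) (dim_col M)" by (rule carrier_matI) auto
  have "M *\<^sub>v w = (1 / vnorm v) \<cdot>\<^sub>v (M *\<^sub>v v)" unfolding w_def
    by (rule mult_mat_vec[OF Mc vc])
  then have "vnorm (M *\<^sub>v w) = vnorm (M *\<^sub>v v) / vnorm v" using pos by (simp add: vnorm_smult)
  moreover have "vnorm (M *\<^sub>v w) \<le> opnorm M" unfolding opnorm_opset
  proof (rule cSup_upper[OF _ opset_bdd])
    show "vnorm (M *\<^sub>v w) \<in> opset M" unfolding opset_def using wd wn by (intro CollectI exI[of _ w]) simp
  qed
  ultimately have "vnorm (M *\<^sub>v v) / vnorm v \<le> opnorm M" by simp
  then show ?thesis using pos by (simp add: divide_le_eq)
qed

lemma opnorm_mult: assumes "M \<in> carrier_mat a b" "N \<in> carrier_mat b c"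
  shows "opnorm (M * N) \<le> opnorm M * opnorm N"
proof (rule opnorm_le)
  show "0 \<le> opnorm M * opnorm N" by (simp add: opnorm_nonneg)
  fix v :: "real vec" assume v: "dim_vec v = dim_col (M * N)"
  then have vc: "v \<in> carrier_vec c" using assms by auto
  have "(M * N) *\<^sub>v v = M *\<^sub>v (N *\<^sub>v v)" using assms vc by (rule assoc_mult_mat_vec)
  also have "vnorm \<dots> \<le> opnorm M * vnorm (N *\<^sub>v v)" using assms by (intro opnorm_apply) auto
  also have "\<dots> \<le> opnorm M * (opnorm N * vnorm v)"
    using assms vc by (intro mult_left_mono opnorm_apply opnorm_nonneg) auto
  finally show "vnorm ((M * N) *\<^sub>v v) \<le> opnorm M * opnorm N * vnorm v" by (simp add: mult.assoc)
qed

lemma opnorm_add: assumes "M \<in> carrier_mat a b" "N \<in> carrier_mat a b"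
  shows "opnorm (M + N) \<le> opnorm M + opnorm N"
proof (rule opnorm_le)
  show "0 \<le> opnorm M + opnorm N" by (simp add: opnorm_nonneg)
  fix v :: "real vec" assume v: "dim_vec v = dim_col (M + N)"
  then have vc: "v \<in> carrier_vec b" using assms by auto
  have "(M + N) *\<^sub>v v = M *\<^sub>v v + N *\<^sub>v v" using assms vc by (rule add_mult_distrib_mat_vec)
  also have "vnorm \<dots> \<le> vnorm (M *\<^sub>v v) + vnorm (N *\<^sub>v v)" using assms by (intro vnorm_add) auto
  also have "\<dots> \<le> opnorm M * vnorm v + opnorm N * vnorm v"
    using assms vc by (intro add_mono opnorm_apply) auto
  finally show "vnorm ((M + N) *\<^sub>v v) \<le> (opnorm M + opnorm N) * vnorm v" by (simp add: algebra_simps)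
qed

lemma opnorm_diff: assumes "M \<in> carrier_mat a b" "N \<in> carrier_mat a b"
  shows "opnorm (M - N) \<le> opnorm M + opnorm N"
proof (rule opnorm_le)
  show "0 \<le> opnorm M + opnorm N" by (simp add: opnorm_nonneg)
  fix v :: "real vec" assume v: "dim_vec v = dim_col (M - N)"
  then have vc: "v \<in> carrier_vec b" using assms by auto
  have "(M - N) *\<^sub>v v = M *\<^sub>v v - N *\<^sub>v v" using assms vc by (rule minus_mult_distrib_mat_vec)
  also have "vnorm \<dots> \<le> vnorm (M *\<^sub>v v) + vnorm (N *\<^sub>v v)" using assms by (intro vnorm_minus) auto
  also have "\<dots> \<le> opnorm M * vnorm v + opnorm N * vnorm v"
    using assms vc by (intro add_mono opnorm_apply) auto
  finally show "vnorm ((M - N) *\<^sub>v v) \<le> (opnorm M + opnorm N) * vnorm v" by (simp add: algebra_simps)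
qed

lemma opnorm_one: "opnorm (1\<^sub>m n) \<le> 1"
  by (rule opnorm_le) auto


lemma mv_assoc: "dim_col A = dim_row B \<Longrightarrow> dim_vec v = dim_col B \<Longrightarrow> (A * B) *\<^sub>v v = A *\<^sub>v (B *\<^sub>v v)"
proof -
  assume 1: "dim_col A = dim_row B" and 2: "dim_vec v = dim_col B"
  show ?thesis
    by (rule assoc_mult_mat_vec[OF carrier_matI[OF refl refl] carrier_matI[OF 1[symmetric] refl] carrier_vecI[OF 2]])
qed

lemma tvs: assumes "A \<in> carrier_mat a b" "x \<in> carrier_vec a" "y \<in> carrier_vec b"
  shows "x \<bullet> (A *\<^sub>v y) = (transpose_mat A *\<^sub>v x) \<bullet> (y :: real vec)"
  using transpose_vec_mult_scalar[OF assms(1) assms(3) assms(2)] by simp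

definition bsym :: "nat \<Rightarrow> real mat \<Rightarrow> bool" where
  "bsym n M \<longleftrightarrow> M \<in> carrier_mat n n \<and>
     (\<forall>x\<in>carrier_vec n. \<forall>y\<in>carrier_vec n. x \<bullet> (M *\<^sub>v y) = y \<bullet> (M *\<^sub>v x))"

definition psdq :: "nat \<Rightarrow> real mat \<Rightarrow> bool" where
  "psdq n M \<longleftrightarrow> (\<forall>x\<in>carrier_vec n. x \<bullet> (M *\<^sub>v x) \<ge> 0)"

definition pdq :: "nat \<Rightarrow> real mat \<Rightarrow> bool" where
  "pdq n M \<longleftrightarrow> (\<forall>x\<in>carrier_vec n. x \<noteq> 0\<^sub>v n \<longrightarrow> x \<bullet> (M *\<^sub>v x) > 0)"

lemma sym_mat_bsym: assumes "sym_mat n M" shows "bsym n M"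
proof -
  have M: "M \<in> carrier_mat n n" and T: "transpose_mat M = M" using assms unfolding sym_mat_def by auto
  show ?thesis unfolding bsym_def
  proof (intro conjI M ballI)
    fix x y :: "real vec" assume x: "x \<in> carrier_vec n" and y: "y \<in> carrier_vec n"
    have "x \<bullet> (M *\<^sub>v y) = (M *\<^sub>v x) \<bullet> y" using tvs[OF M x y] T by simp
    also have "\<dots> = y \<bullet> (M *\<^sub>v x)" using M x y by (intro comm_scalar_prod[of _ n]) auto
    finally show "x \<bullet> (M *\<^sub>v y) = y \<bullet> (M *\<^sub>v x)" .
  qed
qed

lemma inv_exists:
  assumes M: "M \<in> carrier_mat p p" and pd: "pdq p M"
  shows "\<exists>X. X \<in> carrier_mat p p \<and> X * M = 1\<^sub>m p \<and> M * X = 1\<^sub>m p"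
proof -
  have d: "det M \<noteq> 0"
  proof
    assume "det M = 0"
    then obtain v where v: "v \<in> carrier_vec p" "v \<noteq> 0\<^sub>v p" "M *\<^sub>v v = 0\<^sub>v p"
      using det_0_iff_vec_prod_zero[OF M] by blast
    have "v \<bullet> (M *\<^sub>v v) = 0" unfolding v(3) using v(1) by simp
    with pd v show False unfolding pdq_def by fastforce
  qed
  define X where "X = (1 / det M) \<cdot>\<^sub>m adj_mat M"
  have Xc: "X \<in> carrier_mat p p" unfolding X_def using adj_mat(1)[OF M] by simp
  have "M * X = (1 / det M) \<cdot>\<^sub>m (M * adj_mat M)" unfolding X_def
    by (rule mult_smult_distrib[OF M adj_mat(1)[OF M]])
  also have "\<dots> = 1\<^sub>m p" unfolding adj_mat(2)[OF M] using d by (intro eq_matI) auto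
  finally have MX: "M * X = 1\<^sub>m p" .
  have XM: "X * M = 1\<^sub>m p" by (rule mat_mult_left_right_inverse[OF M Xc MX])
  show ?thesis using Xc XM MX by blast
qed

lemma minv_ok:
  assumes M: "M \<in> carrier_mat p p" and pd: "pdq p M"
  shows "minv M \<in> carrier_mat p p \<and> minv M * M = 1\<^sub>m p \<and> M * minv M = 1\<^sub>m p"
proof -
  have dr: "dim_row M = p" using M by simp
  show ?thesis unfolding minv_def dr using someI_ex[OF inv_exists[OF M pd]] .
qed

lemma inv_bsym:
  assumes M: "bsym p M" and X: "X \<in> carrier_mat p p" and MX: "M * X = 1\<^sub>m p"
  shows "bsym p X"
  unfolding bsym_def
proof (intro conjI X ballI)
  have Mc: "M \<in> carrier_mat p p" using M unfolding bsym_def by simp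
  fix u v :: "real vec" assume u: "u \<in> carrier_vec p" and v: "v \<in> carrier_vec p"
  have a: "X *\<^sub>v u \<in> carrier_vec p" "X *\<^sub>v v \<in> carrier_vec p" using X u v by auto
  have uu: "M *\<^sub>v (X *\<^sub>v u) = u" using assoc_mult_mat_vec[OF Mc X u, symmetric] MX u by simp
  have vv: "M *\<^sub>v (X *\<^sub>v v) = v" using assoc_mult_mat_vec[OF Mc X v, symmetric] MX v by simp
  have "u \<bullet> (X *\<^sub>v v) = (M *\<^sub>v (X *\<^sub>v u)) \<bullet> (X *\<^sub>v v)" unfolding uu ..
  also have "\<dots> = (X *\<^sub>v v) \<bullet> (M *\<^sub>v (X *\<^sub>v u))" using Mc a by (intro comm_scalar_prod[of _ p]) auto
  also have "\<dots> = (X *\<^sub>v u) \<bullet> (M *\<^sub>v (X *\<^sub>v v))" using M a unfolding bsym_def by blast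
  also have "\<dots> = (X *\<^sub>v u) \<bullet> v" unfolding vv ..
  also have "\<dots> = v \<bullet> (X *\<^sub>v u)" using a v by (intro comm_scalar_prod[of _ p]) auto
  finally show "u \<bullet> (X *\<^sub>v v) = v \<bullet> (X *\<^sub>v u)" .
qed

lemma tvs2: assumes "B \<in> carrier_mat a b" "x \<in> carrier_vec b" "z \<in> carrier_vec a"
  shows "x \<bullet> (transpose_mat B *\<^sub>v z) = (B *\<^sub>v x) \<bullet> (z :: real vec)"
  using tvs[of "transpose_mat B" b a x z] assms by simp

lemma gram_form:
  assumes B: "B \<in> carrier_mat n p" and P: "P \<in> carrier_mat n n" and R: "R \<in> carrier_mat p p"
    and x: "x \<in> carrier_vec p" and y: "y \<in> carrier_vec p"
  shows "x \<bullet> ((transpose_mat B * P * B + R) *\<^sub>v y) = (B *\<^sub>v x) \<bullet> (P *\<^sub>v (B *\<^sub>v y)) + x \<bullet> (R *\<^sub>v (y :: real vec))"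
proof -
  have G: "transpose_mat B * P * B \<in> carrier_mat p p" using B P by auto
  have d: "dim_row B = n" "dim_col B = p" "dim_row P = n" "dim_col P = n" "dim_vec y = p"
    using B P y by auto
  have "(transpose_mat B * P * B + R) *\<^sub>v y = (transpose_mat B * P * B) *\<^sub>v y + R *\<^sub>v y"
    by (rule add_mult_distrib_mat_vec[OF G R y])
  also have "(transpose_mat B * P * B) *\<^sub>v y = transpose_mat B *\<^sub>v (P *\<^sub>v (B *\<^sub>v y))"
    by (simp only: mv_assoc d index_mult_mat(2,3) index_transpose_mat(2,3) dim_mult_mat_vec)
  finally have "x \<bullet> ((transpose_mat B * P * B + R) *\<^sub>v y) = x \<bullet> (transpose_mat B *\<^sub>v (P *\<^sub>v (B *\<^sub>v y))) + x \<bullet> (R *\<^sub>v y)"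
    using B P R x y by (simp add: scalar_prod_add_distrib[of _ p])
  also have "x \<bullet> (transpose_mat B *\<^sub>v (P *\<^sub>v (B *\<^sub>v y))) = (B *\<^sub>v x) \<bullet> (P *\<^sub>v (B *\<^sub>v y))"
    using B P x y by (intro tvs2[OF B]) auto
  finally show ?thesis .
qed

lemma gram_ok:
  assumes B: "B \<in> carrier_mat n p" and P: "bsym n P" and Pp: "psdq n P" and R: "bsym p R" and Rpd: "pdq p R"
  shows "transpose_mat B * P * B + R \<in> carrier_mat p p \<and> bsym p (transpose_mat B * P * B + R) \<and> pdq p (transpose_mat B * P * B + R)"
proof -
  have Pc: "P \<in> carrier_mat n n" using P unfolding bsym_def by simp
  have Rc: "R \<in> carrier_mat p p" using R unfolding bsym_def by simp
  have Mc: "transpose_mat B * P * B + R \<in> carrier_mat p p" using B Pc Rc by auto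
  have s: "bsym p (transpose_mat B * P * B + R)" unfolding bsym_def
  proof (intro conjI Mc ballI)
    fix x y :: "real vec" assume x: "x \<in> carrier_vec p" and y: "y \<in> carrier_vec p"
    have bx: "B *\<^sub>v x \<in> carrier_vec n" "B *\<^sub>v y \<in> carrier_vec n" using B x y by auto
    show "x \<bullet> ((transpose_mat B * P * B + R) *\<^sub>v y) = y \<bullet> ((transpose_mat B * P * B + R) *\<^sub>v x)"
      unfolding gram_form[OF B Pc Rc x y] gram_form[OF B Pc Rc y x]
      using P R bx x y unfolding bsym_def by auto
  qed
  have q: "pdq p (transpose_mat B * P * B + R)" unfolding pdq_def
  proof (intro ballI impI)
    fix x :: "real vec" assume x: "x \<in> carrier_vec p" and nz: "x \<noteq> 0\<^sub>v p"
    have bx: "B *\<^sub>v x \<in> carrier_vec n" using B x by auto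
    have "(B *\<^sub>v x) \<bullet> (P *\<^sub>v (B *\<^sub>v x)) \<ge> 0" using Pp bx unfolding psdq_def by auto
    moreover have "x \<bullet> (R *\<^sub>v x) > 0" using Rpd x nz unfolding pdq_def by auto
    ultimately show "x \<bullet> ((transpose_mat B * P * B + R) *\<^sub>v x) > 0"
      unfolding gram_form[OF B Pc Rc x x] by simp
  qed
  show ?thesis using Mc s q by blast
qed

lemma cs_ineq:
  assumes B: "B \<in> carrier_mat n p" and P: "bsym n P" and Pp: "psdq n P"
    and Rc: "R \<in> carrier_mat p p" and Rp: "psdq p R"
    and X: "X \<in> carrier_mat p p" and MX: "(transpose_mat B * P * B + R) * X = 1\<^sub>m p"
    and z: "z \<in> carrier_vec n"
  shows "(transpose_mat B *\<^sub>v (P *\<^sub>v z)) \<bullet> (X *\<^sub>v (transpose_mat B *\<^sub>v (P *\<^sub>v z))) \<le> z \<bullet> (P *\<^sub>v z)"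
proof -
  have Pc: "P \<in> carrier_mat n n" using P unfolding bsym_def by simp
  define M where "M = transpose_mat B * P * B + R"
  have Mc: "M \<in> carrier_mat p p" unfolding M_def using B Pc Rc by auto
  define w where "w = transpose_mat B *\<^sub>v (P *\<^sub>v z)"
  have wc: "w \<in> carrier_vec p" unfolding w_def using B Pc z by auto
  define u where "u = X *\<^sub>v w"
  have uc: "u \<in> carrier_vec p" unfolding u_def using X wc by auto
  define b where "b = B *\<^sub>v u"
  have bc: "b \<in> carrier_vec n" unfolding b_def using B uc by auto
  have Pz: "P *\<^sub>v z \<in> carrier_vec n" using Pc z by auto
  have Pb: "P *\<^sub>v b \<in> carrier_vec n" using Pc bc by auto
  have Mu: "M *\<^sub>v u = w" unfolding u_def using assoc_mult_mat_vec[OF Mc X wc, symmetric] MX wc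
    unfolding M_def by simp
  have uMu: "u \<bullet> (M *\<^sub>v u) = b \<bullet> (P *\<^sub>v b) + u \<bullet> (R *\<^sub>v u)"
    unfolding M_def b_def by (rule gram_form[OF B Pc Rc uc uc])
  define v where "v = z - b"
  have vc: "v \<in> carrier_vec n" unfolding v_def using z bc by auto
  have nn: "0 \<le> v \<bullet> (P *\<^sub>v v) + u \<bullet> (R *\<^sub>v u)" using Pp Rp vc uc unfolding psdq_def
    by (simp add: add_nonneg_nonneg)
  have e1: "P *\<^sub>v v = P *\<^sub>v z - P *\<^sub>v b" unfolding v_def by (rule mult_minus_distrib_mat_vec[OF Pc z bc])
  have e2: "v \<bullet> (P *\<^sub>v z - P *\<^sub>v b) = v \<bullet> (P *\<^sub>v z) - v \<bullet> (P *\<^sub>v b)"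
    by (rule scalar_prod_minus_distrib[OF vc Pz Pb])
  have e3: "v \<bullet> (P *\<^sub>v z) = z \<bullet> (P *\<^sub>v z) - b \<bullet> (P *\<^sub>v z)"
    unfolding v_def by (rule minus_scalar_prod_distrib[OF z bc Pz])
  have e4: "v \<bullet> (P *\<^sub>v b) = z \<bullet> (P *\<^sub>v b) - b \<bullet> (P *\<^sub>v b)"
    unfolding v_def by (rule minus_scalar_prod_distrib[OF z bc Pb])
  have e5: "z \<bullet> (P *\<^sub>v b) = b \<bullet> (P *\<^sub>v z)" using P z bc unfolding bsym_def by blast
  have e6: "b \<bullet> (P *\<^sub>v z) = u \<bullet> w" unfolding b_def w_def using tvs2[OF B uc Pz] by simp
  have e7: "u \<bullet> w = w \<bullet> (X *\<^sub>v w)" unfolding u_def using X wc by (intro comm_scalar_prod[of _ p]) auto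
  have "0 \<le> z \<bullet> (P *\<^sub>v z) - u \<bullet> w"
    using nn uMu Mu e1 e2 e3 e4 e5 e6 by simp
  then show ?thesis using e7 unfolding w_def by simp
qed

lemma step_form:
  assumes A: "A \<in> carrier_mat n n" and B: "B \<in> carrier_mat n p" and Q: "Q \<in> carrier_mat n n"
    and P: "bsym n P" and X: "minv (transpose_mat B * P * B + R) \<in> carrier_mat p p"
    and x: "x \<in> carrier_vec n" and y: "y \<in> carrier_vec n"
  shows "x \<bullet> (ric_step A B Q R P *\<^sub>v y) = x \<bullet> (Q *\<^sub>v y) + (A *\<^sub>v x) \<bullet> (P *\<^sub>v (A *\<^sub>v y))
     - (transpose_mat B *\<^sub>v (P *\<^sub>v (A *\<^sub>v x))) \<bullet> (minv (transpose_mat B * P * B + R) *\<^sub>v (transpose_mat B *\<^sub>v (P *\<^sub>v (A *\<^sub>v y))))"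
proof -
  have Pc: "P \<in> carrier_mat n n" using P unfolding bsym_def by simp
  define Xm where "Xm = minv (transpose_mat B * P * B + R)"
  have Xc: "Xm \<in> carrier_mat p p" using X unfolding Xm_def .
  define T1 where "T1 = transpose_mat A * P * A"
  define T2 where "T2 = transpose_mat A * P * B * Xm * transpose_mat B * P * A"
  have T1c: "T1 \<in> carrier_mat n n" unfolding T1_def using A Pc by auto
  have T2c: "T2 \<in> carrier_mat n n" unfolding T2_def using A Pc B Xc by auto
  have d: "dim_row A = n" "dim_col A = n" "dim_row B = n" "dim_col B = p" "dim_col P = n"
    "dim_row P = n" "dim_row Xm = p" "dim_col Xm = p" "dim_vec y = n" using A B Pc Xc y by auto
  have st: "ric_step A B Q R P = Q + T1 - T2" unfolding ric_step_def T1_def T2_def Xm_def ..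
  have "(Q + T1 - T2) *\<^sub>v y = (Q + T1) *\<^sub>v y - T2 *\<^sub>v y"
    using Q T1c T2c y by (intro minus_mult_distrib_mat_vec) auto
  also have "(Q + T1) *\<^sub>v y = Q *\<^sub>v y + T1 *\<^sub>v y" by (rule add_mult_distrib_mat_vec[OF Q T1c y])
  also have "T1 *\<^sub>v y = transpose_mat A *\<^sub>v (P *\<^sub>v (A *\<^sub>v y))" unfolding T1_def
    by (simp only: mv_assoc d index_mult_mat(2,3) index_transpose_mat(2,3) dim_mult_mat_vec)
  also have "T2 *\<^sub>v y = transpose_mat A *\<^sub>v (P *\<^sub>v (B *\<^sub>v (Xm *\<^sub>v (transpose_mat B *\<^sub>v (P *\<^sub>v (A *\<^sub>v y))))))"
    unfolding T2_def
    by (simp only: mv_assoc d index_mult_mat(2,3) index_transpose_mat(2,3) dim_mult_mat_vec)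
  finally have Sy: "ric_step A B Q R P *\<^sub>v y = Q *\<^sub>v y + transpose_mat A *\<^sub>v (P *\<^sub>v (A *\<^sub>v y))
     - transpose_mat A *\<^sub>v (P *\<^sub>v (B *\<^sub>v (Xm *\<^sub>v (transpose_mat B *\<^sub>v (P *\<^sub>v (A *\<^sub>v y))))))"
    unfolding st .
  define a where "a = A *\<^sub>v y"
  define wy where "wy = transpose_mat B *\<^sub>v (P *\<^sub>v a)"
  have ac: "a \<in> carrier_vec n" unfolding a_def using A y by auto
  have wyc: "wy \<in> carrier_vec p" unfolding wy_def using B Pc ac by auto
  have Axc: "A *\<^sub>v x \<in> carrier_vec n" using A x by auto
  have c1: "Q *\<^sub>v y \<in> carrier_vec n" using Q y by auto
  have c2: "transpose_mat A *\<^sub>v (P *\<^sub>v a) \<in> carrier_vec n" using A Pc ac by auto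
  have c3: "transpose_mat A *\<^sub>v (P *\<^sub>v (B *\<^sub>v (Xm *\<^sub>v wy))) \<in> carrier_vec n" using A Pc B Xc wyc by auto
  have f1: "x \<bullet> (Q *\<^sub>v y + transpose_mat A *\<^sub>v (P *\<^sub>v a) - transpose_mat A *\<^sub>v (P *\<^sub>v (B *\<^sub>v (Xm *\<^sub>v wy))))
     = x \<bullet> (Q *\<^sub>v y) + x \<bullet> (transpose_mat A *\<^sub>v (P *\<^sub>v a)) - x \<bullet> (transpose_mat A *\<^sub>v (P *\<^sub>v (B *\<^sub>v (Xm *\<^sub>v wy))))"
    using x c1 c2 c3 by (simp add: scalar_prod_minus_distrib[of _ n] scalar_prod_add_distrib[of _ n])
  have f2: "x \<bullet> (transpose_mat A *\<^sub>v (P *\<^sub>v a)) = (A *\<^sub>v x) \<bullet> (P *\<^sub>v a)"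
    using Pc ac by (intro tvs2[OF A x]) auto
  have XBc: "B *\<^sub>v (Xm *\<^sub>v wy) \<in> carrier_vec n" using B Xc wyc by auto
  have PAx: "P *\<^sub>v (A *\<^sub>v x) \<in> carrier_vec n" using Pc Axc by auto
  have "x \<bullet> (transpose_mat A *\<^sub>v (P *\<^sub>v (B *\<^sub>v (Xm *\<^sub>v wy)))) = (A *\<^sub>v x) \<bullet> (P *\<^sub>v (B *\<^sub>v (Xm *\<^sub>v wy)))"
    using Pc XBc by (intro tvs2[OF A x]) auto
  also have "\<dots> = (B *\<^sub>v (Xm *\<^sub>v wy)) \<bullet> (P *\<^sub>v (A *\<^sub>v x))" using P Axc XBc unfolding bsym_def by blast
  also have "\<dots> = (Xm *\<^sub>v wy) \<bullet> (transpose_mat B *\<^sub>v (P *\<^sub>v (A *\<^sub>v x)))"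
    using tvs2[OF B _ PAx, of "Xm *\<^sub>v wy"] Xc wyc by auto
  also have "\<dots> = (transpose_mat B *\<^sub>v (P *\<^sub>v (A *\<^sub>v x))) \<bullet> (Xm *\<^sub>v wy)"
    using Xc wyc B PAx by (intro comm_scalar_prod[of _ p]) auto
  finally have f3: "x \<bullet> (transpose_mat A *\<^sub>v (P *\<^sub>v (B *\<^sub>v (Xm *\<^sub>v wy)))) = (transpose_mat B *\<^sub>v (P *\<^sub>v (A *\<^sub>v x))) \<bullet> (Xm *\<^sub>v wy)" .
  show ?thesis unfolding Sy a_def[symmetric] wy_def[symmetric] Xm_def[symmetric] f1 f2 f3 ..
qed

lemma pdq_psdq: "pdq p R \<Longrightarrow> psdq p R"
  unfolding pdq_def psdq_def
proof (intro ballI)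
  fix x :: "real vec" assume h: "\<forall>x\<in>carrier_vec p. x \<noteq> 0\<^sub>v p \<longrightarrow> 0 < x \<bullet> (R *\<^sub>v x)" and x: "x \<in> carrier_vec p"
  show "0 \<le> x \<bullet> (R *\<^sub>v x)"
  proof (cases "x = 0\<^sub>v p")
    case True
    have "0\<^sub>v p \<bullet> (R *\<^sub>v 0\<^sub>v p) = 0" by (simp add: scalar_prod_def)
    then show ?thesis using True by simp
  next
    case False then show ?thesis using h x by fastforce
  qed
qed

lemma ric_step_ok:
  assumes A: "A \<in> carrier_mat n n" and B: "B \<in> carrier_mat n p"
    and Q: "bsym n Q" and Qp: "psdq n Q" and R: "bsym p R" and Rpd: "pdq p R"
    and P: "bsym n P" and Pp: "psdq n P"
  shows "bsym n (ric_step A B Q R P) \<and> psdq n (ric_step A B Q R P)"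
proof -
  have Pc: "P \<in> carrier_mat n n" using P unfolding bsym_def by simp
  have Qc: "Q \<in> carrier_mat n n" using Q unfolding bsym_def by simp
  have Rc: "R \<in> carrier_mat p p" using R unfolding bsym_def by simp
  define M where "M = transpose_mat B * P * B + R"
  have G: "M \<in> carrier_mat p p \<and> bsym p M \<and> pdq p M" unfolding M_def by (rule gram_ok[OF B P Pp R Rpd])
  have Xo: "minv M \<in> carrier_mat p p \<and> minv M * M = 1\<^sub>m p \<and> M * minv M = 1\<^sub>m p"
    using minv_ok G by blast
  have Xc: "minv M \<in> carrier_mat p p" using Xo by blast
  have Xs: "bsym p (minv M)" using inv_bsym G Xo by blast
  have Rp: "psdq p R" using pdq_psdq[OF Rpd] .
  have Sc: "ric_step A B Q R P \<in> carrier_mat n n" unfolding ric_step_def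
    by (rule minus_carrier_mat) (use A B Pc Xc M_def in auto)
  have SF: "\<And>x y. x \<in> carrier_vec n \<Longrightarrow> y \<in> carrier_vec n \<Longrightarrow>
     x \<bullet> (ric_step A B Q R P *\<^sub>v y) = x \<bullet> (Q *\<^sub>v y) + (A *\<^sub>v x) \<bullet> (P *\<^sub>v (A *\<^sub>v y))
     - (transpose_mat B *\<^sub>v (P *\<^sub>v (A *\<^sub>v x))) \<bullet> (minv M *\<^sub>v (transpose_mat B *\<^sub>v (P *\<^sub>v (A *\<^sub>v y))))"
    unfolding M_def by (rule step_form[OF A B Qc P Xc[unfolded M_def]])
  have s: "bsym n (ric_step A B Q R P)" unfolding bsym_def
  proof (intro conjI Sc ballI)
    fix x y :: "real vec" assume x: "x \<in> carrier_vec n" and y: "y \<in> carrier_vec n"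
    have ax: "A *\<^sub>v x \<in> carrier_vec n" "A *\<^sub>v y \<in> carrier_vec n" using A x y by auto
    have wx: "transpose_mat B *\<^sub>v (P *\<^sub>v (A *\<^sub>v x)) \<in> carrier_vec p"
      "transpose_mat B *\<^sub>v (P *\<^sub>v (A *\<^sub>v y)) \<in> carrier_vec p" using B Pc ax by auto
    have 1: "x \<bullet> (Q *\<^sub>v y) = y \<bullet> (Q *\<^sub>v x)" using Q x y unfolding bsym_def by blast
    have 2: "(A *\<^sub>v x) \<bullet> (P *\<^sub>v (A *\<^sub>v y)) = (A *\<^sub>v y) \<bullet> (P *\<^sub>v (A *\<^sub>v x))"
      using P ax unfolding bsym_def by blast
    have 3: "(transpose_mat B *\<^sub>v (P *\<^sub>v (A *\<^sub>v x))) \<bullet> (minv M *\<^sub>v (transpose_mat B *\<^sub>v (P *\<^sub>v (A *\<^sub>v y))))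
      = (transpose_mat B *\<^sub>v (P *\<^sub>v (A *\<^sub>v y))) \<bullet> (minv M *\<^sub>v (transpose_mat B *\<^sub>v (P *\<^sub>v (A *\<^sub>v x))))"
      using Xs wx unfolding bsym_def by blast
    show "x \<bullet> (ric_step A B Q R P *\<^sub>v y) = y \<bullet> (ric_step A B Q R P *\<^sub>v x)"
      unfolding SF[OF x y] SF[OF y x] 1 2 3 ..
  qed
  have q: "psdq n (ric_step A B Q R P)" unfolding psdq_def
  proof (intro ballI)
    fix x :: "real vec" assume x: "x \<in> carrier_vec n"
    have ax: "A *\<^sub>v x \<in> carrier_vec n" using A x by auto
    have "(transpose_mat B *\<^sub>v (P *\<^sub>v (A *\<^sub>v x))) \<bullet> (minv M *\<^sub>v (transpose_mat B *\<^sub>v (P *\<^sub>v (A *\<^sub>v x))))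
       \<le> (A *\<^sub>v x) \<bullet> (P *\<^sub>v (A *\<^sub>v x))"
      by (rule cs_ineq[OF B P Pp Rc Rp Xc _ ax]) (use Xo M_def in simp)
    moreover have "x \<bullet> (Q *\<^sub>v x) \<ge> 0" using Qp x unfolding psdq_def by blast
    ultimately show "0 \<le> x \<bullet> (ric_step A B Q R P *\<^sub>v x)" unfolding SF[OF x x] by simp
  qed
  show ?thesis using s q by blast
qed

lemma ric_back_ok:
  assumes A: "A \<in> carrier_mat n n" and B: "B \<in> carrier_mat n p"
    and Q: "bsym n Q" and Qp: "psdq n Q" and R: "bsym p R" and Rpd: "pdq p R"
    and Qf: "bsym n Qf" and Qfp: "psdq n Qf"
  shows "bsym n (ric_back A B Q Qf R j) \<and> psdq n (ric_back A B Q Qf R j)"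
proof (induction j)
  case 0 then show ?case using Qf Qfp by simp
next
  case (Suc j) then show ?case using ric_step_ok[OF A B Q Qp R Rpd] by simp
qed

lemma ric_K_carrier:
  assumes A: "A \<in> carrier_mat n n" and B: "B \<in> carrier_mat n p"
    and Q: "bsym n Q" and Qp: "psdq n Q" and R: "bsym p R" and Rpd: "pdq p R"
    and Qf: "bsym n Qf" and Qfp: "psdq n Qf"
  shows "ric_K A B Q Qf R N k \<in> carrier_mat p n"
proof -
  define P where "P = ric_P A B Q Qf R N (Suc k)"
  have PP: "bsym n P \<and> psdq n P" unfolding P_def ric_P_def by (rule ric_back_ok[OF A B Q Qp R Rpd Qf Qfp])
  then have Pc: "P \<in> carrier_mat n n" unfolding bsym_def by simp
  have G: "transpose_mat B * P * B + R \<in> carrier_mat p p \<and> bsym p (transpose_mat B * P * B + R) \<and> pdq p (transpose_mat B * P * B + R)"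
    using gram_ok[OF B _ _ R Rpd] PP by blast
  have Xc: "minv (transpose_mat B * P * B + R) \<in> carrier_mat p p" using minv_ok G by blast
  have "minv (transpose_mat B * P * B + R) * transpose_mat B * P * A \<in> carrier_mat p n"
    using Xc B Pc A by auto
  then show ?thesis unfolding ric_K_def P_def[symmetric] Let_def by (rule uminus_carrier_mat)
qed


lemma psi_id: "psi A B K k k = 1\<^sub>m (dim_row A)"
  by (cases k) auto

lemma psi_step: "k1 \<le> k \<Longrightarrow> psi A B K (Suc k) k1 = (A + B * K k) * psi A B K k k1"
  by simp

lemma M_carrier:
  assumes "A \<in> carrier_mat n n" "B \<in> carrier_mat n p" "K \<in> carrier_mat p n"
  shows "A + B * K \<in> carrier_mat n n"
  using assms by (intro add_carrier_mat mult_carrier_mat) auto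

lemma psi_carrier:
  assumes A: "A \<in> carrier_mat n n" and B: "B \<in> carrier_mat n p"
    and K: "\<And>k. k < N \<Longrightarrow> K k \<in> carrier_mat p n"
  shows "k2 \<le> N \<Longrightarrow> psi A B K k2 k1 \<in> carrier_mat n n"
proof (induction k2)
  case 0 then show ?case using A by simp
next
  case (Suc k)
  have M: "A + B * K k \<in> carrier_mat n n" using M_carrier[OF A B K] Suc by simp
  have IH: "psi A B K k k1 \<in> carrier_mat n n" using Suc by simp
  show ?case using A M IH by (simp add: mult_carrier_mat[OF M IH])
qed

lemma psi_split:
  assumes A: "A \<in> carrier_mat n n" and B: "B \<in> carrier_mat n p"
    and K: "\<And>k. k < N \<Longrightarrow> K k \<in> carrier_mat p n"
  shows "k1 < k2 \<Longrightarrow> k2 \<le> N \<Longrightarrow> psi A B K k2 k1 = psi A B K k2 (Suc k1) * (A + B * K k1)"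
proof (induction k2)
  case 0 thus ?case by simp
next
  case (Suc k)
  have Mk1: "A + B * K k1 \<in> carrier_mat n n" using M_carrier[OF A B K] Suc by simp
  have dA: "dim_row A = n" using A by simp
  show ?case
  proof (cases "k = k1")
    case True
    then have "psi A B K (Suc k) k1 = (A + B * K k1) * psi A B K k1 k1" by simp
    also have "\<dots> = A + B * K k1" unfolding psi_id dA using Mk1 by (rule right_mult_one_mat)
    also have "\<dots> = psi A B K (Suc k) (Suc k1) * (A + B * K k1)" unfolding True psi_id dA
      using Mk1 by (rule left_mult_one_mat[symmetric])
    finally show ?thesis .
  next
    case False
    then have lt: "k1 < k" using Suc by simp
    have Mk: "A + B * K k \<in> carrier_mat n n" using M_carrier[OF A B K] Suc by simp
    have Pc: "psi A B K k (Suc k1) \<in> carrier_mat n n" using psi_carrier[OF A B K] Suc by simp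
    have "psi A B K (Suc k) k1 = (A + B * K k) * psi A B K k k1" using lt by simp
    also have "\<dots> = (A + B * K k) * (psi A B K k (Suc k1) * (A + B * K k1))" using Suc lt by simp
    also have "\<dots> = ((A + B * K k) * psi A B K k (Suc k1)) * (A + B * K k1)"
      using Mk Pc Mk1 by (simp add: assoc_mult_mat[OF Mk Pc Mk1])
    also have "(A + B * K k) * psi A B K k (Suc k1) = psi A B K (Suc k) (Suc k1)" using lt by simp
    finally show ?thesis .
  qed
qed

lemma perturb_main:
  fixes A BS :: "real mat" and K Kh :: "nat \<Rightarrow> real mat" and \<epsilon> \<zeta> \<eta> :: real
  assumes A: "A \<in> carrier_mat n n" and B: "BS \<in> carrier_mat n p"
    and K: "\<And>k. k < N \<Longrightarrow> K k \<in> carrier_mat p n"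
    and Kh: "\<And>k. k < N \<Longrightarrow> Kh k \<in> carrier_mat p n"
    and close: "\<And>k. k < N \<Longrightarrow> opnorm (K k - Kh k) \<le> \<epsilon>"
    and Pb: "\<And>k1 k2. k1 \<le> k2 \<Longrightarrow> k2 \<le> N \<Longrightarrow> opnorm (psi A BS K k2 k1) \<le> \<zeta> * \<eta> ^ (k2 - k1)"
    and small: "opnorm BS * \<epsilon> * \<zeta> \<le> (1 - \<eta>) / 2"
    and eps: "\<epsilon> \<ge> 0" and zeta: "\<zeta> \<ge> 0" and eta: "0 \<le> \<eta>"
  shows "k1 + d \<le> N \<Longrightarrow> opnorm (psi A BS Kh (k1 + d) k1) \<le> \<zeta> * ((1 + \<eta>) / 2) ^ d"
proof (induction d rule: less_induct)
  case (less D)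
  define \<rho> where "\<rho> = (1 + \<eta>) / 2"
  define c where "c = (1 - \<eta>) / 2"
  define \<beta> where "\<beta> = opnorm BS * \<epsilon>"
  have \<beta>0: "\<beta> \<ge> 0" unfolding \<beta>_def using eps opnorm_nonneg by simp
  have \<zeta>\<beta>: "\<zeta> * \<beta> \<le> c" unfolding \<beta>_def c_def using small by (simp add: mult_ac)
  have \<rho>\<eta>: "\<rho> - \<eta> = c" unfolding \<rho>_def c_def by (simp add: field_simps)
  have \<rho>0: "\<rho> \<ge> 0" unfolding \<rho>_def using eta by simp
  define k2 where "k2 = k1 + D"
  have k2N: "k2 \<le> N" using less.prems k2_def by simp
  let ?P = "psi A BS K"
  let ?Ph = "\<lambda>j. psi A BS Kh j k1"
  define X where "X i = ?P k2 (k1 + i) * ?Ph (k1 + i)" for i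
  have Pc: "\<And>a b. a \<le> N \<Longrightarrow> ?P a b \<in> carrier_mat n n" by (rule psi_carrier[OF A B K])
  have Phc: "\<And>a. a \<le> N \<Longrightarrow> ?Ph a \<in> carrier_mat n n" by (rule psi_carrier[OF A B Kh])
  have Xb: "i \<le> D \<Longrightarrow> opnorm (X i) \<le> \<zeta> * \<eta> ^ D + (\<Sum>l<i. \<zeta> * \<eta> ^ (D - Suc l) * \<beta> * opnorm (?Ph (k1 + l)))" for i
  proof (induction i)
    case 0
    have "X 0 = ?P k2 k1" unfolding X_def using right_mult_one_mat[OF Pc[OF k2N]] A by (simp add: psi_id)
    then show ?case using Pb[of k1 k2] k2N k2_def by simp
  next
    case (Suc i)
    define j where "j = k1 + i"
    have jN: "j < N" "j < k2" using Suc.prems k2N k2_def j_def by auto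
    have Kj: "K j \<in> carrier_mat p n" and Khj: "Kh j \<in> carrier_mat p n" using K Kh jN by auto
    have Dj: "K j - Kh j \<in> carrier_mat p n" using Khj by (rule minus_carrier_mat)
    have Mj: "A + BS * K j \<in> carrier_mat n n" using M_carrier[OF A B Kj] .
    have BDj: "BS * (K j - Kh j) \<in> carrier_mat n n" using B Dj by (rule mult_carrier_mat)
    have P1: "?P k2 (Suc j) \<in> carrier_mat n n" using Pc k2N by simp
    have Ph0: "?Ph j \<in> carrier_mat n n" using Phc jN by simp
    have Mh: "A + BS * Kh j = (A + BS * K j) - BS * (K j - Kh j)"
    proof -
      have "BS * (K j - Kh j) = BS * K j - BS * Kh j" using B Kj Khj by (rule mult_minus_distrib_mat)
      then show ?thesis using A B Kj Khj by (intro eq_matI) auto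
    qed
    define E where "E = ?P k2 (Suc j) * (BS * (K j - Kh j) * ?Ph j)"
    have "X (Suc i) = ?P k2 (Suc j) * ((A + BS * Kh j) * ?Ph j)"
      unfolding X_def j_def by (simp add: psi_step)
    also have "\<dots> = ?P k2 (Suc j) * ((A + BS * K j) * ?Ph j - BS * (K j - Kh j) * ?Ph j)"
      unfolding Mh using Mj BDj Ph0 by (simp add: minus_mult_distrib_mat[OF Mj BDj Ph0])
    also have "\<dots> = ?P k2 (Suc j) * ((A + BS * K j) * ?Ph j) - E"
      unfolding E_def by (rule mult_minus_distrib_mat[OF P1 mult_carrier_mat[OF Mj Ph0] mult_carrier_mat[OF BDj Ph0]])
    also have "?P k2 (Suc j) * ((A + BS * K j) * ?Ph j) = (?P k2 (Suc j) * (A + BS * K j)) * ?Ph j"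
      using assoc_mult_mat[OF P1 Mj Ph0] by simp
    also have "?P k2 (Suc j) * (A + BS * K j) = ?P k2 j"
      using psi_split[OF A B K jN(2) k2N] by simp
    also have "?P k2 j * ?Ph j = X i" unfolding X_def j_def ..
    finally have Xeq: "X (Suc i) = X i - E" .
    have Pj: "?P k2 j \<in> carrier_mat n n" using Pc k2N by simp
    have Xic: "X i \<in> carrier_mat n n" unfolding X_def j_def[symmetric] using Pj Ph0 by (rule mult_carrier_mat)
    have Ec: "E \<in> carrier_mat n n" unfolding E_def using P1 mult_carrier_mat[OF BDj Ph0] by (rule mult_carrier_mat)
    have "opnorm E \<le> opnorm (?P k2 (Suc j)) * (opnorm (BS * (K j - Kh j)) * opnorm (?Ph j))"
      unfolding E_def using P1 BDj Ph0
      by (meson mult_carrier_mat mult_left_mono opnorm_mult opnorm_nonneg order_trans)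
    also have "\<dots> \<le> (\<zeta> * \<eta> ^ (D - Suc i)) * (\<beta> * opnorm (?Ph j))"
    proof (rule mult_mono)
      show "opnorm (?P k2 (Suc j)) \<le> \<zeta> * \<eta> ^ (D - Suc i)"
        using Pb[of "Suc j" k2] jN k2N unfolding k2_def j_def by simp
      have "opnorm (BS * (K j - Kh j)) \<le> opnorm BS * opnorm (K j - Kh j)" using B Dj by (rule opnorm_mult)
      also have "\<dots> \<le> \<beta>" unfolding \<beta>_def using close[OF jN(1)] opnorm_nonneg by (intro mult_left_mono) auto
      finally show "opnorm (BS * (K j - Kh j)) * opnorm (?Ph j) \<le> \<beta> * opnorm (?Ph j)"
        using opnorm_nonneg by (intro mult_right_mono) auto
    qed (use opnorm_nonneg zeta eta in auto)
    finally have Eb: "opnorm E \<le> \<zeta> * \<eta> ^ (D - Suc i) * \<beta> * opnorm (?Ph (k1 + i))"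
      unfolding j_def by (simp add: mult_ac)
    have "opnorm (X (Suc i)) \<le> opnorm (X i) + opnorm E" unfolding Xeq using Xic Ec by (rule opnorm_diff)
    then show ?case using Suc Eb by simp
  qed
  have "X D = ?Ph k2" unfolding X_def k2_def using Phc[OF k2N] A
    by (simp add: psi_id k2_def)
  then have "opnorm (?Ph k2) \<le> \<zeta> * \<eta> ^ D + (\<Sum>l<D. \<zeta> * \<eta> ^ (D - Suc l) * \<beta> * opnorm (?Ph (k1 + l)))"
    using Xb[of D] by simp
  also have "(\<Sum>l<D. \<zeta> * \<eta> ^ (D - Suc l) * \<beta> * opnorm (?Ph (k1 + l))) \<le> (\<Sum>l<D. c * (\<zeta> * (\<eta> ^ (D - Suc l) * \<rho> ^ l)))"
  proof (rule sum_mono)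
    fix l assume l: "l \<in> {..<D}"
    have IH: "opnorm (?Ph (k1 + l)) \<le> \<zeta> * \<rho> ^ l" using less.IH[of l] l less.prems unfolding \<rho>_def by simp
    have nn: "0 \<le> \<zeta> * (\<eta> ^ (D - Suc l) * \<rho> ^ l)" using zeta eta \<rho>0 by simp
    have "\<zeta> * \<eta> ^ (D - Suc l) * \<beta> * opnorm (?Ph (k1 + l)) \<le> \<zeta> * \<eta> ^ (D - Suc l) * \<beta> * (\<zeta> * \<rho> ^ l)"
      using IH zeta eta \<beta>0 by (intro mult_left_mono) auto
    also have "\<dots> = (\<zeta> * \<beta>) * (\<zeta> * (\<eta> ^ (D - Suc l) * \<rho> ^ l))" by (simp add: mult_ac)
    also have "\<dots> \<le> c * (\<zeta> * (\<eta> ^ (D - Suc l) * \<rho> ^ l))" using \<zeta>\<beta> nn by (rule mult_right_mono)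
    finally show "\<zeta> * \<eta> ^ (D - Suc l) * \<beta> * opnorm (?Ph (k1 + l)) \<le> c * (\<zeta> * (\<eta> ^ (D - Suc l) * \<rho> ^ l))" .
  qed
  also have "(\<Sum>l<D. c * (\<zeta> * (\<eta> ^ (D - Suc l) * \<rho> ^ l))) = \<zeta> * (\<rho> ^ D - \<eta> ^ D)"
    unfolding power_diff_sumr2[of \<rho> D \<eta>] \<rho>\<eta> by (simp add: sum_distrib_left mult_ac)
  finally show ?case unfolding k2_def \<rho>_def by (simp add: algebra_simps)
qed


lemma delta_sum_r: fixes c k :: nat assumes "c < k" shows "(\<Sum>b\<in>{0..<k}. g b * (if b = c then 1 else 0)) = (g c :: real)"
proof -
  have "(\<Sum>b\<in>{0..<k}. g b * (if b = c then 1 else 0)) = (\<Sum>b\<in>{0..<k}. if b = c then g b else 0)"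
    by (intro sum.cong) auto
  also have "\<dots> = g c" using assms by (subst sum.delta) auto
  finally show ?thesis .
qed

lemma delta_sum_l: fixes c k :: nat assumes "c < k" shows "(\<Sum>b\<in>{0..<k}. (if b = c then 1 else 0) * g b) = (g c :: real)"
proof -
  have "(\<Sum>b\<in>{0..<k}. (if b = c then 1 else 0) * g b) = (\<Sum>b\<in>{0..<k}. if b = c then g b else 0)"
    by (intro sum.cong) auto
  also have "\<dots> = g c" using assms by (subst sum.delta) auto
  finally show ?thesis .
qed

lemma pick_ok:
  fixes J :: "nat set" and m :: nat
  defines "p \<equiv> card {j. j < m \<and> j \<in> J}"
  shows "i < p \<Longrightarrow> pick J i < m"
    and "i < p \<Longrightarrow> j < p \<Longrightarrow> pick J i = pick J j \<longleftrightarrow> i = j"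
proof -
  show "i < p \<Longrightarrow> pick J i < m" unfolding p_def by (rule pick_le)
  have cj: "k < p \<Longrightarrow> k < card J \<or> infinite J" for k
  proof (cases "finite J")
    case True
    have "{j. j < m \<and> j \<in> J} \<subseteq> J" by auto
    then have "p \<le> card J" unfolding p_def using True by (intro card_mono) auto
    then show "k < p \<Longrightarrow> ?thesis" by simp
  qed simp
  assume i: "i < p" and j: "j < p"
  show "pick J i = pick J j \<longleftrightarrow> i = j"
  proof
    assume e: "pick J i = pick J j"
    show "i = j"
    proof (rule ccontr)
      assume "i \<noteq> j"
      then consider "i < j" | "j < i" by linarith
      then show False
      proof cases
        case 1 then show False using pick_mono[OF cj[OF j] 1] e by simp
      next
        case 2 then show False using pick_mono[OF cj[OF i] 2] e by simp
      qed
    qed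
  qed simp
qed

lemma sub_ok:
  fixes R :: "real mat" and J :: "nat set"
  assumes R: "bsym m R" and Rpd: "pdq m R"
  defines "p \<equiv> card {j. j < m \<and> j \<in> J}"
  shows "submatrix R J J \<in> carrier_mat p p \<and> bsym p (submatrix R J J) \<and> pdq p (submatrix R J J)"
proof -
  have Rc: "R \<in> carrier_mat m m" using R unfolding bsym_def by simp
  have dR: "dim_row R = m" "dim_col R = m" using Rc by auto
  let ?f = "pick J"
  have fm: "\<And>i. i < p \<Longrightarrow> ?f i < m" using pick_ok(1) unfolding p_def by blast
  have finj: "\<And>i j. i < p \<Longrightarrow> j < p \<Longrightarrow> ?f i = ?f j \<longleftrightarrow> i = j" using pick_ok(2) unfolding p_def by blast
  define RS where "RS = submatrix R J J"
  have RSc: "RS \<in> carrier_mat p p" unfolding RS_def p_def by (rule carrier_matI) (simp_all add: dim_submatrix dR)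
  have RSi: "\<And>i j. i < p \<Longrightarrow> j < p \<Longrightarrow> RS $$ (i, j) = R $$ (?f i, ?f j)"
    unfolding RS_def p_def using dR by (intro submatrix_index) auto
  define Sel :: "real mat" where "Sel = mat m p (\<lambda>(a, i). if a = ?f i then 1 else 0)"
  have Selc: "Sel \<in> carrier_mat m p" unfolding Sel_def by simp
  have StR: "(transpose_mat Sel * R) $$ (i, b) = R $$ (?f i, b)" if i: "i < p" and b: "b < m" for i b
  proof -
    have "(transpose_mat Sel * R) $$ (i, b) = (\<Sum>a\<in>{0..<m}. (if a = ?f i then 1 else 0) * R $$ (a, b))"
      using i b Selc Rc by (simp add: scalar_prod_def Sel_def)
    also have "\<dots> = R $$ (?f i, b)" by (rule delta_sum_l[OF fm[OF i]])
    finally show ?thesis .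
  qed
  have RSeq: "RS = transpose_mat Sel * R * Sel"
  proof (rule eq_matI)
    fix i j assume i: "i < dim_row (transpose_mat Sel * R * Sel)" and j: "j < dim_col (transpose_mat Sel * R * Sel)"
    have i': "i < p" and j': "j < p" using i j Selc by auto
    have "(transpose_mat Sel * R * Sel) $$ (i, j) = (\<Sum>b\<in>{0..<m}. (transpose_mat Sel * R) $$ (i, b) * (if b = ?f j then 1 else 0))"
      using i' j' Selc Rc by (simp add: scalar_prod_def Sel_def)
    also have "\<dots> = (\<Sum>b\<in>{0..<m}. R $$ (?f i, b) * (if b = ?f j then 1 else 0))"
      using StR[OF i'] by simp
    also have "\<dots> = R $$ (?f i, ?f j)" by (rule delta_sum_r[OF fm[OF j']])
    finally show "RS $$ (i, j) = (transpose_mat Sel * R * Sel) $$ (i, j)" using RSi[OF i' j'] by simp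
  qed (use RSc Selc in auto)
  have form: "x \<bullet> (RS *\<^sub>v y) = (Sel *\<^sub>v x) \<bullet> (R *\<^sub>v (Sel *\<^sub>v y))" if x: "x \<in> carrier_vec p" and y: "y \<in> carrier_vec p" for x y
  proof -
    have d: "dim_row Sel = m" "dim_col Sel = p" "dim_row R = m" "dim_col R = m" "dim_vec y = p" using Selc Rc y by auto
    have "RS *\<^sub>v y = transpose_mat Sel *\<^sub>v (R *\<^sub>v (Sel *\<^sub>v y))" unfolding RSeq
      by (simp only: mv_assoc d index_mult_mat(2,3) index_transpose_mat(2,3) dim_mult_mat_vec)
    then show ?thesis using tvs2[OF Selc x] Rc Selc y by simp
  qed
  have s: "bsym p RS" unfolding bsym_def
  proof (intro conjI RSc ballI)
    fix x y :: "real vec" assume x: "x \<in> carrier_vec p" and y: "y \<in> carrier_vec p"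
    have "Sel *\<^sub>v x \<in> carrier_vec m" "Sel *\<^sub>v y \<in> carrier_vec m" using Selc x y by auto
    then show "x \<bullet> (RS *\<^sub>v y) = y \<bullet> (RS *\<^sub>v x)" unfolding form[OF x y] form[OF y x]
      using R unfolding bsym_def by blast
  qed
  have q: "pdq p RS" unfolding pdq_def
  proof (intro ballI impI)
    fix x :: "real vec" assume x: "x \<in> carrier_vec p" and nz: "x \<noteq> 0\<^sub>v p"
    obtain i where i: "i < p" and xi: "x $ i \<noteq> 0" using nz x by (metis eq_vecI carrier_vecD index_zero_vec(1,2))
    have Sx: "Sel *\<^sub>v x \<in> carrier_vec m" using Selc x by auto
    have "(Sel *\<^sub>v x) $ (?f i) = (\<Sum>j\<in>{0..<p}. (if ?f i = ?f j then 1 else 0) * x $ j)"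
      using fm[OF i] x Selc by (simp add: scalar_prod_def Sel_def)
    also have "\<dots> = (\<Sum>j\<in>{0..<p}. (if j = i then 1 else 0) * x $ j)"
      using finj[OF i] by (intro sum.cong) auto
    also have "\<dots> = x $ i" by (rule delta_sum_l[OF i])
    finally have "Sel *\<^sub>v x \<noteq> 0\<^sub>v m" using xi fm[OF i] by auto
    then show "0 < x \<bullet> (RS *\<^sub>v x)" unfolding form[OF x x] using Rpd Sx unfolding pdq_def by blast
  qed
  show ?thesis using RSc s q unfolding RS_def by blast
qed


theorem lemma6:
  fixes n q H N T t :: nat
    and ms :: "nat \<Rightarrow> nat"
    and A B Ahat Bhat :: "real mat"
    and Q Qf R :: "nat \<Rightarrow> real mat"
    and S :: "nat set"
    and \<epsilon> \<zeta> \<eta> :: real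
  defines "m \<equiv> blk_off ms q"
  defines "BS \<equiv> B_sel ms B S"
  defines "BhS \<equiv> B_sel ms Bhat S"
  defines "K \<equiv> ric_K A BS (Q t) (Qf t) (R_sel ms (R t) S) N"
  defines "Khat \<equiv> ric_K Ahat BhS (Q t) (Qf t) (R_sel ms (R t) S) N"
  assumes blocks: "\<forall>i<q. ms i \<ge> 1"
    and dimA: "A \<in> carrier_mat n n" and dimB: "B \<in> carrier_mat n m"
    and dimAhat: "Ahat \<in> carrier_mat n n" and dimBhat: "Bhat \<in> carrier_mat n m"
    and H_pos: "H \<ge> 1" and N_pos: "N \<ge> 1" and T_pos: "T \<ge> 1"
    and costs: "\<forall>s\<in>{1..T}. psd_mat n (Q s) \<and> psd_mat n (Qf s) \<and> pd_mat m (R s)"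
    and assm1: "\<forall>s\<in>{1..T}. pd_mat n (Qf s) \<and> sigma_n (Q s) \<ge> 1 \<and> sigma_n (R s) \<ge> 1"
    and assm2: "\<exists>l\<in>{1..n-1}. \<exists>\<nu>>0. \<forall>S'. S' \<subseteq> {0..<q} \<and> card S' = H \<longrightarrow>
                   sigma_n (ctrb A (B_sel ms B S') l) \<ge> \<nu>"
    and S_sub: "S \<subseteq> {0..<q}" and S_card: "card S = H"
    and t_in: "t \<in> {1..T}"
    and eps_pos: "\<epsilon> > 0"
    and K_close: "\<forall>k<N. opnorm (K k - Khat k) \<le> \<epsilon>"
    and zeta: "\<zeta> \<ge> 1" and eta: "0 < \<eta>" "\<eta> < 1"
    and Psi_bound: "\<forall>k1 k2. k1 \<le> k2 \<and> k2 \<le> N \<longrightarrow>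
                      opnorm (psi A BS K k2 k1) \<le> \<zeta> * \<eta> ^ (k2 - k1)"
    and eps_small: "\<epsilon> \<le> (1 - \<eta>) / (2 * opnorm BS * \<zeta>)"
  shows "\<forall>k1 k2. k1 \<le> k2 \<and> k2 \<le> N \<longrightarrow>
           opnorm (psi A BS Khat k2 k1) \<le> \<zeta> * ((1 + \<eta>) / 2) ^ (k2 - k1)"
proof -
  define J where "J = blk_cols ms S"
  define p where "p = card {j. j < m \<and> j \<in> J}"
  have ct: "psd_mat n (Q t) \<and> psd_mat n (Qf t) \<and> pd_mat m (R t)" using costs t_in by blast
  have Qs: "bsym n (Q t)" using ct sym_mat_bsym unfolding psd_mat_def by blast
  have Qp: "psdq n (Q t)" using ct unfolding psd_mat_def psdq_def by auto
  have Qfs: "bsym n (Qf t)" using ct sym_mat_bsym unfolding psd_mat_def by blast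
  have Qfp: "psdq n (Qf t)" using ct unfolding psd_mat_def psdq_def by auto
  have Rs: "bsym m (R t)" using ct sym_mat_bsym unfolding pd_mat_def by blast
  have Rpd: "pdq m (R t)" using ct unfolding pd_mat_def pdq_def by auto
  have RS: "R_sel ms (R t) S \<in> carrier_mat p p \<and> bsym p (R_sel ms (R t) S) \<and> pdq p (R_sel ms (R t) S)"
    unfolding R_sel_def p_def J_def[symmetric] by (rule sub_ok[OF Rs Rpd])
  have dB: "dim_row B = n" "dim_col B = m" using dimB by auto
  have dBh: "dim_row Bhat = n" "dim_col Bhat = m" using dimBhat by auto
  have cn: "card {i. i < n \<and> i \<in> {0..<n}} = n" by simp
  have BSc: "BS \<in> carrier_mat n p" unfolding BS_def B_sel_def J_def[symmetric] p_def
    by (rule carrier_matI) (simp_all only: dim_submatrix dB cn)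
  have BhSc: "BhS \<in> carrier_mat n p" unfolding BhS_def B_sel_def J_def[symmetric] p_def
    by (rule carrier_matI) (simp_all only: dim_submatrix dBh cn)
  have Kc: "\<And>k. k < N \<Longrightarrow> K k \<in> carrier_mat p n" unfolding K_def
    using ric_K_carrier[OF dimA BSc Qs Qp _ _ Qfs Qfp] RS by blast
  have Khc: "\<And>k. k < N \<Longrightarrow> Khat k \<in> carrier_mat p n" unfolding Khat_def
    using ric_K_carrier[OF dimAhat BhSc Qs Qp _ _ Qfs Qfp] RS by blast
  have small: "opnorm BS * \<epsilon> * \<zeta> \<le> (1 - \<eta>) / 2"
  proof (cases "opnorm BS = 0")
    case True then show ?thesis using eta by simp
  next
    case False
    then have pos: "0 < 2 * opnorm BS * \<zeta>" using opnorm_nonneg[of BS] zeta by simp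
    have "\<epsilon> * (2 * opnorm BS * \<zeta>) \<le> 1 - \<eta>" using eps_small pos by (simp add: le_divide_eq)
    then show ?thesis by (simp add: mult_ac)
  qed
  show ?thesis
  proof (intro allI impI)
    fix k1 k2 :: nat assume h: "k1 \<le> k2 \<and> k2 \<le> N"
    have "opnorm (psi A BS Khat (k1 + (k2 - k1)) k1) \<le> \<zeta> * ((1 + \<eta>) / 2) ^ (k2 - k1)"
      by (rule perturb_main[OF dimA BSc Kc Khc _ _ small]) (use K_close Psi_bound h eps_pos zeta eta in auto)
    then show "opnorm (psi A BS Khat k2 k1) \<le> \<zeta> * ((1 + \<eta>) / 2) ^ (k2 - k1)" using h by simp
  qed
qed


end
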